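(* Let $\theta:\mathbb{R}\to(0,\infty)$ be a periodic function and $\alpha>0$. Then the following statements are equivalent. (i) $\theta(y+\delta)\le e^{\alpha\delta}\theta(y)$ for all $y>0$ and $\delta>0$. (ii) $\theta(y+\delta)\le e^{\alpha\delta}\theta(y)$ for all $y\in\mathbb{R}$ and $\delta\ge0$. (iii) $\theta(y-\delta)\ge e^{-\alpha\delta}\theta(y)$ for all $y\in\mathbb{R}$ and $\delta\ge0$. (iv) The mapping $t\mapsto t^{-\alpha}\theta(\log t)$ is non-increasing for $t>0$. If $\theta$ is additionally differentiable, then each of (i)–(iv) is equivalent to (v) $\theta'(y)\le\alpha\,\theta(y)$ for all $y\in\mathbb{R}$. *)

theory Defs
  imports "HOL-Analysis.Analysis"
begin

definition periodic_fun :: "(real \<Rightarrow> real) \<Rightarrow> bool" where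
  "periodic_fun f \<longleftrightarrow> (\<exists>p>0. \<forall>y. f (y + p) = f y)"

end

theory Submission
  imports Defs
begin

lemma step_equiv:
  fixes \<theta> :: "real \<Rightarrow> real" and \<alpha> x \<delta> :: real
  shows "\<theta> (x + \<delta>) \<le> exp (\<alpha> * \<delta>) * \<theta> x \<longleftrightarrow>
         exp (- \<alpha> * (x + \<delta>)) * \<theta> (x + \<delta>) \<le> exp (- \<alpha> * x) * \<theta> x"
proof -
  have c: "exp (- \<alpha> * (x + \<delta>)) > 0" by simp
  have e: "exp (- \<alpha> * (x + \<delta>)) * exp (\<alpha> * \<delta>) = exp (- \<alpha> * x)"
    by (simp add: exp_add[symmetric] algebra_simps)
  have "\<theta> (x + \<delta>) \<le> exp (\<alpha> * \<delta>) * \<theta> x \<longleftrightarrow>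
        exp (- \<alpha> * (x + \<delta>)) * \<theta> (x + \<delta>) \<le> exp (- \<alpha> * (x + \<delta>)) * (exp (\<alpha> * \<delta>) * \<theta> x)"
    using c by (simp add: mult_le_cancel_left_pos)
  also have "\<dots> \<longleftrightarrow> exp (- \<alpha> * (x + \<delta>)) * \<theta> (x + \<delta>) \<le> exp (- \<alpha> * x) * \<theta> x"
    by (simp only: mult.assoc[symmetric] e)
  finally show ?thesis .
qed

lemma per_mult:
  fixes \<theta> :: "real \<Rightarrow> real"
  assumes "\<forall>y. \<theta> (y + p) = \<theta> y"
  shows "\<theta> (y + real n * p) = \<theta> y"
proof (induction n)
  case 0 then show ?case by simp
next
  case (Suc n)
  have "\<theta> (y + real (Suc n) * p) = \<theta> ((y + real n * p) + p)" by (simp add: algebra_simps)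
  also have "\<dots> = \<theta> (y + real n * p)" using assms by simp
  finally show ?case using Suc by simp
qed

theorem lemmaA1:
  fixes \<theta> :: "real \<Rightarrow> real" and \<alpha> :: real
  assumes pos: "\<And>y. \<theta> y > 0"
    and per: "periodic_fun \<theta>"
    and alpha: "\<alpha> > 0"
  defines "P1 \<equiv> (\<forall>y>0. \<forall>\<delta>>0. \<theta> (y + \<delta>) \<le> exp (\<alpha> * \<delta>) * \<theta> y)"
    and "P2 \<equiv> (\<forall>y. \<forall>\<delta>\<ge>0. \<theta> (y + \<delta>) \<le> exp (\<alpha> * \<delta>) * \<theta> y)"
    and "P3 \<equiv> (\<forall>y. \<forall>\<delta>\<ge>0. \<theta> (y - \<delta>) \<ge> exp (- \<alpha> * \<delta>) * \<theta> y)"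
    and "P4 \<equiv> antimono_on {0<..} (\<lambda>t::real. t powr (- \<alpha>) * \<theta> (ln t))"
  shows "(P1 \<longleftrightarrow> P2) \<and> (P1 \<longleftrightarrow> P3) \<and> (P1 \<longleftrightarrow> P4) \<and>
         ((\<forall>y. \<theta> differentiable (at y)) \<longrightarrow>
            (P1 \<longleftrightarrow> (\<forall>y. deriv \<theta> y \<le> \<alpha> * \<theta> y)))"
proof -
  define g where "g y = exp (- \<alpha> * y) * \<theta> y" for y
  define G where "G \<longleftrightarrow> (\<forall>x y. x \<le> y \<longrightarrow> g y \<le> g x)"
  have P2G: "P2 \<longleftrightarrow> G"
  proof
    assume P2
    show G unfolding G_def
    proof (intro allI impI)
      fix x y :: real assume "x \<le> y"
      then have "\<theta> (x + (y - x)) \<le> exp (\<alpha> * (y - x)) * \<theta> x" using \<open>P2\<close> unfolding P2_def by (metis diff_ge_0_iff_ge)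
      then show "g y \<le> g x" unfolding g_def using step_equiv[of \<theta> x "y - x" \<alpha>] by simp
    qed
  next
    assume G
    show P2 unfolding P2_def
    proof (intro allI impI)
      fix y \<delta> :: real assume "\<delta> \<ge> 0"
      then have "g (y + \<delta>) \<le> g y" using \<open>G\<close> G_def by auto
      then show "\<theta> (y + \<delta>) \<le> exp (\<alpha> * \<delta>) * \<theta> y" unfolding g_def using step_equiv[of \<theta> y \<delta> \<alpha>] by simp
    qed
  qed
  have P23: "P2 \<longleftrightarrow> P3"
  proof -
    have "\<theta> (y - \<delta>) \<ge> exp (- \<alpha> * \<delta>) * \<theta> y \<longleftrightarrow> \<theta> ((y - \<delta>) + \<delta>) \<le> exp (\<alpha> * \<delta>) * \<theta> (y - \<delta>)"
      for y \<delta>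
    proof -
      have e: "exp (\<alpha> * \<delta>) * exp (- \<alpha> * \<delta>) = 1" by (simp add: exp_add[symmetric])
      have "\<theta> (y - \<delta>) \<ge> exp (- \<alpha> * \<delta>) * \<theta> y \<longleftrightarrow>
            exp (\<alpha> * \<delta>) * \<theta> (y - \<delta>) \<ge> exp (\<alpha> * \<delta>) * (exp (- \<alpha> * \<delta>) * \<theta> y)"
        by (simp add: mult_le_cancel_left_pos)
      also have "\<dots> \<longleftrightarrow> exp (\<alpha> * \<delta>) * \<theta> (y - \<delta>) \<ge> \<theta> y"
        by (simp only: mult.assoc[symmetric] e mult_1)
      finally show ?thesis by simp
    qed
    then have "P3 \<longleftrightarrow> (\<forall>y. \<forall>\<delta>\<ge>0. \<theta> ((y - \<delta>) + \<delta>) \<le> exp (\<alpha> * \<delta>) * \<theta> (y - \<delta>))"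
      unfolding P3_def by simp
    also have "\<dots> \<longleftrightarrow> P2" unfolding P2_def
      by (metis add_diff_cancel_right')
    finally show ?thesis by simp
  qed
  have P4G: "P4 \<longleftrightarrow> G"
  proof -
    have h: "t powr (- \<alpha>) * \<theta> (ln t) = g (ln t)" if "t > 0" for t
      using that by (simp add: g_def powr_def)
    show ?thesis
    proof
      assume P4
      show G unfolding G_def
      proof (intro allI impI)
        fix x y :: real assume "x \<le> y"
        then have "exp x \<le> exp y" by simp
        then have "exp y powr (- \<alpha>) * \<theta> (ln (exp y)) \<le> exp x powr (- \<alpha>) * \<theta> (ln (exp x))"
          using \<open>P4\<close> unfolding P4_def monotone_on_def by (meson exp_gt_zero greaterThan_iff)
        then show "g y \<le> g x" using h[of "exp x"] h[of "exp y"] by simp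
      qed
    next
      assume G
      show P4 unfolding P4_def monotone_on_def
      proof (intro ballI impI)
        fix s t :: real assume "s \<in> {0<..}" "t \<in> {0<..}" "s \<le> t"
        then have "ln s \<le> ln t" by simp
        then have "g (ln t) \<le> g (ln s)" using \<open>G\<close> G_def by auto
        then show "t powr (- \<alpha>) * \<theta> (ln t) \<le> s powr (- \<alpha>) * \<theta> (ln s)"
          using h \<open>s \<in> {0<..}\<close> \<open>t \<in> {0<..}\<close> by simp
      qed
    qed
  qed
  have P12: "P1 \<longleftrightarrow> P2"
  proof
    assume P2 then show P1 unfolding P1_def P2_def by auto
  next
    assume "P1"
    obtain p where p: "p > 0" "\<forall>y. \<theta> (y + p) = \<theta> y" using per unfolding periodic_fun_def by auto
    show P2 unfolding P2_def
    proof (intro allI impI)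
      fix y \<delta> :: real assume d: "\<delta> \<ge> 0"
      show "\<theta> (y + \<delta>) \<le> exp (\<alpha> * \<delta>) * \<theta> y"
      proof (cases "\<delta> = 0")
        case True then show ?thesis by simp
      next
        case False
        obtain n :: nat where n: "real n > \<bar>y\<bar> / p" using reals_Archimedean2 by blast
        then have "real n * p > \<bar>y\<bar>" using p(1) by (simp add: field_simps)
        then have yp: "y + real n * p > 0" by linarith
        have "\<theta> ((y + real n * p) + \<delta>) \<le> exp (\<alpha> * \<delta>) * \<theta> (y + real n * p)"
          using \<open>P1\<close> yp d False unfolding P1_def by auto
        moreover have "\<theta> ((y + real n * p) + \<delta>) = \<theta> (y + \<delta>)"
          using per_mult[OF p(2), of "y + \<delta>" n] by (simp add: algebra_simps)
        moreover have "\<theta> (y + real n * p) = \<theta> y" using per_mult[OF p(2)] by simp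
        ultimately show ?thesis by simp
      qed
    qed
  qed
  have D: "(\<forall>y. \<theta> differentiable (at y)) \<longrightarrow> (G \<longleftrightarrow> (\<forall>y. deriv \<theta> y \<le> \<alpha> * \<theta> y))"
  proof
    assume dif: "\<forall>y. \<theta> differentiable (at y)"
    have dth: "(\<theta> has_real_derivative deriv \<theta> y) (at y)" for y
      using dif by (simp add: DERIV_deriv_iff_real_differentiable)
    have dg: "(g has_real_derivative exp (- \<alpha> * y) * (deriv \<theta> y - \<alpha> * \<theta> y)) (at y)" for y
    proof -
      have "((\<lambda>y. exp (- \<alpha> * y)) has_real_derivative exp (- \<alpha> * y) * (- \<alpha>)) (at y)"
        by (auto intro!: derivative_eq_intros)
      from DERIV_mult[OF this dth[of y]] show ?thesis
        unfolding g_def by (simp add: algebra_simps)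
    qed
    show "G \<longleftrightarrow> (\<forall>y. deriv \<theta> y \<le> \<alpha> * \<theta> y)"
    proof
      assume G
      show "\<forall>y. deriv \<theta> y \<le> \<alpha> * \<theta> y"
      proof (rule allI, rule ccontr)
        fix y assume "\<not> deriv \<theta> y \<le> \<alpha> * \<theta> y"
        then have "exp (- \<alpha> * y) * (deriv \<theta> y - \<alpha> * \<theta> y) > 0" by simp
        from DERIV_pos_inc_right[OF dg this] obtain d where "d > 0" "\<forall>h>0. h < d \<longrightarrow> g y < g (y + h)"
          by blast
        then have "g y < g (y + d/2)" by simp
        moreover have "g (y + d/2) \<le> g y" using \<open>G\<close> \<open>d > 0\<close> G_def by simp
        ultimately show False by simp
      qed
    next
      assume H: "\<forall>y. deriv \<theta> y \<le> \<alpha> * \<theta> y"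
      show G unfolding G_def
      proof (intro allI impI)
        fix x y :: real assume "x \<le> y"
        show "g y \<le> g x"
        proof (rule DERIV_nonpos_imp_nonincreasing[OF \<open>x \<le> y\<close>])
          fix z assume "x \<le> z" "z \<le> y"
          have "exp (- \<alpha> * z) * (deriv \<theta> z - \<alpha> * \<theta> z) \<le> 0"
            using H by (simp add: mult_nonneg_nonpos)
          then show "\<exists>d. (g has_real_derivative d) (at z) \<and> d \<le> 0" using dg by blast
        qed
      qed
    qed
  qed
  show ?thesis using P12 P23 P2G P4G D by blast
qed

end
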